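(* Let $q,r\ge 0$, let $f:\mathbb{R}\to\mathbb{R}$ be $(q,r)$-continuous at every point of $\mathbb{R}$, and let $C\subseteq\mathbb{R}$ be $q$-connected. Then $f(C)$ is $r$-connected.
   Context: For $A\subseteq\mathbb{R}$ and $c\in\mathbb{R}$, $\mathrm{dist}(c,A)=\mathrm{dist}(A,c)=\inf\{|a-c| : a\in A\}$. For $r\ge0$, a set $C\subseteq\mathbb{R}$ is $r$-disconnected if $C=A\cup B$ for some nonempty sets $A,B$ such that $\mathrm{dist}(a,B)>r$ for every $a\in A$ and $\mathrm{dist}(A,b)>r$ for every $b\in B$; $C$ is $r$-connected if it is not $r$-disconnected. A function $f:\mathbb{R}\to\mathbb{R}$ is $(q,r)$-continuous at $a$ if for every $\varepsilon>0$ there is $\delta>0$ such that $|x-a|<q+\delta$ implies $|f(x)-f(a)|<r+\varepsilon$. *)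

theory Defs
  imports "HOL-Analysis.Analysis"
begin

definition pdist :: "real \<Rightarrow> real set \<Rightarrow> real" where
  "pdist c A = Inf {\<bar>a - c\<bar> | a. a \<in> A}"

definition r_disconnected :: "real \<Rightarrow> real set \<Rightarrow> bool" where
  "r_disconnected r C \<longleftrightarrow> (\<exists>A B. C = A \<union> B \<and> A \<noteq> {} \<and> B \<noteq> {} \<and>
      (\<forall>a\<in>A. pdist a B > r) \<and> (\<forall>b\<in>B. pdist b A > r))"

definition r_connected :: "real \<Rightarrow> real set \<Rightarrow> bool" where
  "r_connected r C \<longleftrightarrow> \<not> r_disconnected r C"

definition qr_continuous_at :: "real \<Rightarrow> real \<Rightarrow> (real \<Rightarrow> real) \<Rightarrow> real \<Rightarrow> bool" where
  "qr_continuous_at q r f a \<longleftrightarrow> (\<forall>\<epsilon>>0. \<exists>\<delta>>0. \<forall>x. \<bar>x - a\<bar> < q + \<delta> \<longrightarrow> \<bar>f x - f a\<bar> < r + \<epsilon>)"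

end

theory Submission
  imports Defs
begin

lemma pdist_lower:
  assumes "x \<in> S" shows "pdist c S \<le> \<bar>x - c\<bar>"
  unfolding pdist_def
  by (rule cInf_lower) (use assms in \<open>auto intro!: bdd_belowI[where m=0]\<close>)

lemma pdist_close:
  assumes "S \<noteq> {}" "pdist c S < t" shows "\<exists>x\<in>S. \<bar>x - c\<bar> < t"
proof -
  have "{\<bar>a - c\<bar> | a. a \<in> S} \<noteq> {}" using assms by auto
  from cInf_lessD[OF this] assms(2) show ?thesis unfolding pdist_def by auto
qed

lemma key:
  assumes cont: "qr_continuous_at q r f c" and S: "S \<noteq> {}" and d: "pdist c S \<le> q"
    and B: "f ` S \<subseteq> B"
  shows "pdist (f c) B \<le> r"
proof (rule field_le_epsilon)
  fix e :: real assume e: "e > 0"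
  obtain \<delta> where \<delta>: "\<delta> > 0" "\<forall>x. \<bar>x - c\<bar> < q + \<delta> \<longrightarrow> \<bar>f x - f c\<bar> < r + e"
    using cont e unfolding qr_continuous_at_def by blast
  obtain x where x: "x \<in> S" "\<bar>x - c\<bar> < q + \<delta>" using pdist_close[OF S, of c "q+\<delta>"] d \<delta>(1) by fastforce
  have "f x \<in> B" using B x(1) by blast
  hence "pdist (f c) B \<le> \<bar>f x - f c\<bar>" by (rule pdist_lower)
  also have "\<dots> < r + e" using \<delta>(2) x(2) by blast
  finally show "pdist (f c) B \<le> r + e" by simp
qed

theorem theorem6:
  fixes q r :: real and f :: "real \<Rightarrow> real" and C :: "real set"
  assumes "q \<ge> 0" and "r \<ge> 0"
    and "\<forall>a. qr_continuous_at q r f a"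
    and "r_connected q C"
  shows "r_connected r (f ` C)"
proof -
  have False if H: "r_disconnected r (f ` C)"
  proof -
    obtain A B where AB: "f ` C = A \<union> B" "A \<noteq> {}" "B \<noteq> {}"
      "\<forall>a\<in>A. pdist a B > r" "\<forall>b\<in>B. pdist b A > r"
      using H unfolding r_disconnected_def by blast
    define C1 where "C1 = {c\<in>C. f c \<in> A}"
    define C2 where "C2 = {c\<in>C. f c \<in> B}"
    have ne1: "C1 \<noteq> {}"
    proof -
      obtain y where "y \<in> A" using AB(2) by blast
      then obtain c where "c \<in> C" "f c = y" using AB(1) by (metis UnI1 imageE)
      thus ?thesis unfolding C1_def using \<open>y \<in> A\<close> by blast
    qed
    have ne2: "C2 \<noteq> {}"
    proof -
      obtain y where "y \<in> B" using AB(3) by blast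
      then obtain c where "c \<in> C" "f c = y" using AB(1) by (metis UnI2 imageE)
      thus ?thesis unfolding C2_def using \<open>y \<in> B\<close> by blast
    qed
    note ne = ne1 ne2
    have un: "C = C1 \<union> C2" using AB(1) unfolding C1_def C2_def by auto
    have s1: "\<forall>a\<in>C1. pdist a C2 > q"
    proof
      fix a assume a: "a \<in> C1"
      show "pdist a C2 > q"
      proof (rule ccontr)
        assume "\<not> ?thesis"
        hence le: "pdist a C2 \<le> q" by simp
        have sub: "f ` C2 \<subseteq> B" unfolding C2_def by blast
        have "pdist (f a) B \<le> r"
          by (rule key[OF assms(3)[rule_format] ne(2) le sub])
        moreover have "f a \<in> A" using a unfolding C1_def by blast
        ultimately show False using AB(4) by (meson not_le)
      qed
    qed
    have s2: "\<forall>a\<in>C2. pdist a C1 > q"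
    proof
      fix a assume a: "a \<in> C2"
      show "pdist a C1 > q"
      proof (rule ccontr)
        assume "\<not> ?thesis"
        hence le: "pdist a C1 \<le> q" by simp
        have sub: "f ` C1 \<subseteq> A" unfolding C1_def by blast
        have "pdist (f a) A \<le> r"
          by (rule key[OF assms(3)[rule_format] ne(1) le sub])
        moreover have "f a \<in> B" using a unfolding C2_def by blast
        ultimately show False using AB(5) by (meson not_le)
      qed
    qed
    have "r_disconnected q C" unfolding r_disconnected_def
      by (rule exI[of _ C1], rule exI[of _ C2]) (use un ne s1 s2 in simp)
    thus False using assms(4) unfolding r_connected_def by simp
  qed
  thus ?thesis unfolding r_connected_def by blast
qed

end
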